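(* Let $n\ge 2$ and let $B$ be an $n\times n$ agreement matrix. If $0<H(X_B^+)\le H(Y_B^+)$, then $IA_\epsilon(B)$ exists and $$IA_\epsilon(B)=1+\frac{H(Y_B^+)-H((X_BY_B)^+)}{H(X_B^+)}.$$
   Context: An $n\times n$ agreement matrix $B$ has nonnegative entries $B[y][x]$ (row $y$, column $x$), not all zero. For any $n\times n$ matrix $M$ with nonnegative real entries not all zero, let $S_M=\sum_{y,x}M[y][x]$ and define random variables $X_M$ on $\{1,\dots,n\}$ with $P(X_M=x)=\sum_yM[y][x]/S_M$, $Y_M$ with $P(Y_M=y)=\sum_xM[y][x]/S_M$, and the joint variable $X_MY_M$ with $P(X_MY_M=(y,x))=M[y][x]/S_M$. $H$ is Shannon entropy in base 2, defined only when all probabilities are positive. The information agreement is $IA(M)=\frac{H(X_M)+H(Y_M)-H(X_MY_M)}{\min\{H(X_M),H(Y_M)\}}$. For $\epsilon>0$, the $0$-freed matrix $B_\epsilon$ is obtained from $B$ by replacing every zero entry by $\epsilon$; then $IA_\epsilon(B)=\lim_{\epsilon\to0^+}IA(B_\epsilon)$ (when this limit exists). For a random variable $Z$ on $\mathcal{Z}$, the refined variable $Z^+$ is $Z$ restricted to $\{z:p_Z(z)>0\}$ with the same probabilities, so $H(Z^+)=-\sum_{z:\,p_Z(z)>0}p_Z(z)\log_2p_Z(z)$. *)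

theory Defs
  imports Complex_Main
begin

text \<open>An n x n matrix is a function nat => nat => real, entry M y x is row y, column x,
  with indices ranging over {..<n} (a shift of 1..n).\<close>

definition agreement_matrix :: "nat \<Rightarrow> (nat \<Rightarrow> nat \<Rightarrow> real) \<Rightarrow> bool" where
  "agreement_matrix n B \<longleftrightarrow> (\<forall>y<n. \<forall>x<n. B y x \<ge> 0) \<and> (\<exists>y<n. \<exists>x<n. B y x \<noteq> 0)"

definition Ssum :: "nat \<Rightarrow> (nat \<Rightarrow> nat \<Rightarrow> real) \<Rightarrow> real" where
  "Ssum n M = (\<Sum>y<n. \<Sum>x<n. M y x)"

definition pX :: "nat \<Rightarrow> (nat \<Rightarrow> nat \<Rightarrow> real) \<Rightarrow> nat \<Rightarrow> real" where
  "pX n M x = (\<Sum>y<n. M y x) / Ssum n M"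

definition pY :: "nat \<Rightarrow> (nat \<Rightarrow> nat \<Rightarrow> real) \<Rightarrow> nat \<Rightarrow> real" where
  "pY n M y = (\<Sum>x<n. M y x) / Ssum n M"

definition pXY :: "nat \<Rightarrow> (nat \<Rightarrow> nat \<Rightarrow> real) \<Rightarrow> nat \<times> nat \<Rightarrow> real" where
  "pXY n M yx = M (fst yx) (snd yx) / Ssum n M"

text \<open>Shannon entropy (base 2) of a distribution p on a finite set A (used only when all
  probabilities are positive), and entropy of the refined variable Z^+.\<close>
definition entropy :: "'a set \<Rightarrow> ('a \<Rightarrow> real) \<Rightarrow> real" where
  "entropy A p = - (\<Sum>z\<in>A. p z * log 2 (p z))"

definition entropy_plus :: "'a set \<Rightarrow> ('a \<Rightarrow> real) \<Rightarrow> real" where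
  "entropy_plus A p = - (\<Sum>z\<in>{z\<in>A. p z > 0}. p z * log 2 (p z))"

definition HX :: "nat \<Rightarrow> (nat \<Rightarrow> nat \<Rightarrow> real) \<Rightarrow> real" where
  "HX n M = entropy {..<n} (pX n M)"
definition HY :: "nat \<Rightarrow> (nat \<Rightarrow> nat \<Rightarrow> real) \<Rightarrow> real" where
  "HY n M = entropy {..<n} (pY n M)"
definition HXY :: "nat \<Rightarrow> (nat \<Rightarrow> nat \<Rightarrow> real) \<Rightarrow> real" where
  "HXY n M = entropy ({..<n} \<times> {..<n}) (pXY n M)"

definition HX_plus :: "nat \<Rightarrow> (nat \<Rightarrow> nat \<Rightarrow> real) \<Rightarrow> real" where
  "HX_plus n M = entropy_plus {..<n} (pX n M)"
definition HY_plus :: "nat \<Rightarrow> (nat \<Rightarrow> nat \<Rightarrow> real) \<Rightarrow> real" where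
  "HY_plus n M = entropy_plus {..<n} (pY n M)"
definition HXY_plus :: "nat \<Rightarrow> (nat \<Rightarrow> nat \<Rightarrow> real) \<Rightarrow> real" where
  "HXY_plus n M = entropy_plus ({..<n} \<times> {..<n}) (pXY n M)"

definition IA :: "nat \<Rightarrow> (nat \<Rightarrow> nat \<Rightarrow> real) \<Rightarrow> real" where
  "IA n M = (HX n M + HY n M - HXY n M) / min (HX n M) (HY n M)"

definition zero_freed :: "(nat \<Rightarrow> nat \<Rightarrow> real) \<Rightarrow> real \<Rightarrow> nat \<Rightarrow> nat \<Rightarrow> real" where
  "zero_freed B \<epsilon> y x = (if B y x = 0 then \<epsilon> else B y x)"

end

theory Submission
  imports Defs "HOL-Real_Asymp.Real_Asymp"
begin

lemma xlogx_tendsto: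
  fixes f :: "'b \<Rightarrow> real"
  assumes "(f \<longlongrightarrow> a) F" "eventually (\<lambda>x. f x > 0) F" "a \<ge> 0"
  shows "((\<lambda>x. f x * log 2 (f x)) \<longlongrightarrow> a * log 2 a) F"
proof (cases "a > 0")
  case True
  then show ?thesis by (intro tendsto_intros assms) auto
next
  case False
  then have a0: "a = 0" using assms(3) by simp
  have lim0: "((\<lambda>t::real. t * log 2 t) \<longlongrightarrow> 0) (at_right 0)" by real_asymp
  have "filterlim f (at_right 0) F" using assms a0
    by (auto simp: filterlim_at elim: eventually_mono)
  from filterlim_compose[OF lim0 this] show ?thesis using a0 by simp
qed

lemma ent_tendsto:
  fixes p :: "'b \<Rightarrow> 'a \<Rightarrow> real"
  assumes "finite A" "\<And>z. z\<in>A \<Longrightarrow> ((\<lambda>e. p e z) \<longlongrightarrow> q z) F"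
    "\<And>z. z\<in>A \<Longrightarrow> eventually (\<lambda>e. p e z > 0) F" "\<And>z. z\<in>A \<Longrightarrow> q z \<ge> 0"
  shows "((\<lambda>e. entropy A (p e)) \<longlongrightarrow> entropy_plus A q) F"
proof -
  have eq: "entropy_plus A q = - (\<Sum>z\<in>A. q z * log 2 (q z))"
    unfolding entropy_plus_def using assms(1,4)
    by (auto simp: sum.inter_filter intro!: sum.cong)
       (metis assms(4) less_eq_real_def mult_zero_left)
  show ?thesis unfolding eq entropy_def
    by (intro tendsto_minus tendsto_sum xlogx_tendsto assms)
qed

theorem theorem1:
  fixes n :: nat and B :: "nat \<Rightarrow> nat \<Rightarrow> real"
  assumes "n \<ge> 2"
    and "agreement_matrix n B"
    and "0 < HX_plus n B" and "HX_plus n B \<le> HY_plus n B"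
  shows "((\<lambda>\<epsilon>. IA n (zero_freed B \<epsilon>)) \<longlongrightarrow>
           1 + (HY_plus n B - HXY_plus n B) / HX_plus n B) (at_right 0)"
proof -
  let ?F = "at_right (0::real)"
  have nonneg: "\<And>y x. y < n \<Longrightarrow> x < n \<Longrightarrow> B y x \<ge> 0"
    using assms(2) by (auto simp: agreement_matrix_def)
  obtain y0 x0 where yx0: "y0 < n" "x0 < n" "B y0 x0 \<noteq> 0"
    using assms(2) by (auto simp: agreement_matrix_def)
  have Spos: "Ssum n B > 0"
  proof -
    have rows: "\<And>y. y < n \<Longrightarrow> 0 \<le> (\<Sum>x<n. B y x)"
      by (intro sum_nonneg) (auto intro: nonneg)
    have "B y0 x0 \<le> (\<Sum>x<n. B y0 x)"
      by (rule member_le_sum) (auto intro: nonneg yx0)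
    also have "\<dots> \<le> (\<Sum>y<n. \<Sum>x<n. B y x)"
      by (rule member_le_sum[of y0 "{..<n}" "\<lambda>y. \<Sum>x<n. B y x"]) (auto intro: rows yx0)
    finally show ?thesis using yx0 nonneg[of y0 x0] unfolding Ssum_def by linarith
  qed
  have ent: "\<And>y x. ((\<lambda>e. zero_freed B e y x) \<longlongrightarrow> B y x) ?F"
  proof -
    fix y x
    show "((\<lambda>e. zero_freed B e y x) \<longlongrightarrow> B y x) ?F"
    proof (cases "B y x = 0")
      case True
      then show ?thesis by (simp add: zero_freed_def tendsto_ident_at)
    qed (simp add: zero_freed_def)
  qed
  have entpos: "\<And>y x. y < n \<Longrightarrow> x < n \<Longrightarrow> eventually (\<lambda>e. zero_freed B e y x > 0) ?F"
  proof -
    fix y x assume yx: "y < n" "x < n"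
    have "eventually (\<lambda>e::real. e > 0) ?F" by (simp add: eventually_at_right_less)
    then show "eventually (\<lambda>e. zero_freed B e y x > 0) ?F"
      by (rule eventually_mono) (use nonneg[OF yx] in \<open>auto simp: zero_freed_def less_le\<close>)
  qed
  have n0: "n > 0" using assms(1) by simp
  have Stend: "((\<lambda>e. Ssum n (zero_freed B e)) \<longlongrightarrow> Ssum n B) ?F"
    unfolding Ssum_def by (intro tendsto_sum ent)
  have colpos: "\<And>x. x < n \<Longrightarrow> eventually (\<lambda>e. (\<Sum>y<n. zero_freed B e y x) > 0) ?F"
  proof -
    fix x assume x: "x < n"
    have "eventually (\<lambda>e. \<forall>y\<in>{..<n}. zero_freed B e y x > 0) ?F"
      using x entpos by (subst eventually_ball_finite_distrib) auto
    then show "eventually (\<lambda>e. (\<Sum>y<n. zero_freed B e y x) > 0) ?F"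
      by (rule eventually_mono) (use n0 in \<open>auto intro!: sum_pos\<close>)
  qed
  have rowpos: "\<And>y. y < n \<Longrightarrow> eventually (\<lambda>e. (\<Sum>x<n. zero_freed B e y x) > 0) ?F"
  proof -
    fix y assume y: "y < n"
    have "eventually (\<lambda>e. \<forall>x\<in>{..<n}. zero_freed B e y x > 0) ?F"
      using y entpos by (subst eventually_ball_finite_distrib) auto
    then show "eventually (\<lambda>e. (\<Sum>x<n. zero_freed B e y x) > 0) ?F"
      by (rule eventually_mono) (use n0 in \<open>auto intro!: sum_pos\<close>)
  qed
  have Sevpos: "eventually (\<lambda>e. Ssum n (zero_freed B e) > 0) ?F"
  proof -
    have "eventually (\<lambda>e. \<forall>y\<in>{..<n}. (\<Sum>x<n. zero_freed B e y x) > 0) ?F"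
      using rowpos by (subst eventually_ball_finite_distrib) auto
    then show ?thesis unfolding Ssum_def
      by (rule eventually_mono) (rule sum_pos; use n0 in auto)
  qed
  have HX: "((\<lambda>e. HX n (zero_freed B e)) \<longlongrightarrow> HX_plus n B) ?F"
    unfolding HX_def HX_plus_def
  proof (rule ent_tendsto)
    fix z assume z: "z \<in> {..<n}"
    show "((\<lambda>e. pX n (zero_freed B e) z) \<longlongrightarrow> pX n B z) ?F"
      unfolding pX_def using Spos by (intro tendsto_intros Stend ent) auto
    show "eventually (\<lambda>e. pX n (zero_freed B e) z > 0) ?F"
      using colpos[of z] Sevpos z unfolding pX_def
      by (auto elim: eventually_elim2)
    show "pX n B z \<ge> 0" unfolding pX_def using Spos nonneg z
      by (auto intro!: divide_nonneg_pos sum_nonneg)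
  qed simp
  have HY: "((\<lambda>e. HY n (zero_freed B e)) \<longlongrightarrow> HY_plus n B) ?F"
    unfolding HY_def HY_plus_def
  proof (rule ent_tendsto)
    fix z assume z: "z \<in> {..<n}"
    show "((\<lambda>e. pY n (zero_freed B e) z) \<longlongrightarrow> pY n B z) ?F"
      unfolding pY_def using Spos by (intro tendsto_intros Stend ent) auto
    show "eventually (\<lambda>e. pY n (zero_freed B e) z > 0) ?F"
      using rowpos[of z] Sevpos z unfolding pY_def
      by (auto elim: eventually_elim2)
    show "pY n B z \<ge> 0" unfolding pY_def using Spos nonneg z
      by (auto intro!: divide_nonneg_pos sum_nonneg)
  qed simp
  have HXY: "((\<lambda>e. HXY n (zero_freed B e)) \<longlongrightarrow> HXY_plus n B) ?F"
    unfolding HXY_def HXY_plus_def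
  proof (rule ent_tendsto)
    fix z assume z: "z \<in> {..<n} \<times> {..<n}"
    show "((\<lambda>e. pXY n (zero_freed B e) z) \<longlongrightarrow> pXY n B z) ?F"
      unfolding pXY_def using Spos by (intro tendsto_intros Stend ent) auto
    show "eventually (\<lambda>e. pXY n (zero_freed B e) z > 0) ?F"
      using entpos[of "fst z" "snd z"] Sevpos z unfolding pXY_def
      by (auto elim: eventually_elim2)
    show "pXY n B z \<ge> 0" unfolding pXY_def using Spos nonneg z
      by (auto intro!: divide_nonneg_pos)
  qed simp
  have mn: "min (HX_plus n B) (HY_plus n B) = HX_plus n B" using assms(4) by simp
  have "((\<lambda>e. IA n (zero_freed B e)) \<longlongrightarrow>
     (HX_plus n B + HY_plus n B - HXY_plus n B) / min (HX_plus n B) (HY_plus n B)) ?F"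
    unfolding IA_def using mn assms(3) by (intro tendsto_intros HX HY HXY) auto
  moreover have "(HX_plus n B + HY_plus n B - HXY_plus n B) / min (HX_plus n B) (HY_plus n B)
      = 1 + (HY_plus n B - HXY_plus n B) / HX_plus n B"
    using mn assms(3) by (simp add: field_simps)
  ultimately show ?thesis by simp
qed

end
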